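(* Any projective plane curve invariant under $\mathcal{V}$ is defined by a homogeneous polynomial invariant under $\widetilde{\mathcal{V}}$.
   Context: Let $\rho = e^{2\pi i/3}$ and $\tau = (1+\sqrt{5})/2$. Define $Z = \mathrm{diag}(-1,1,-1)$, $T = \begin{pmatrix}0&0&1\\1&0&0\\0&1&0\end{pmatrix}$, $Q = \begin{pmatrix}1&0&0\\0&0&\rho^{2}\\0&-\rho&0\end{pmatrix}$, $P = \frac{1}{2}\begin{pmatrix}1&\tau^{-1}&-\tau\\ \tau^{-1}&\tau&1\\ \tau&-1&\tau^{-1}\end{pmatrix}$, all in $\mathrm{SL}(3,\mathbb{C})$. Let $\widetilde{\mathcal{V}} \subset \mathrm{SL}(3,\mathbb{C})$ be the group generated by $Z,T,Q,P$ and $\mathcal{V}\cong \mathfrak{A}_6$ its image in $\mathrm{PGL}(3,\mathbb{C})$, acting on $\mathbb{P}^2$ via $[A]\cdot(a:b:c)=[A(a,b,c)^t]$. A projective plane curve is a nonzero effective divisor on $\mathbb{P}^2$; it is invariant under $\mathcal{V}$ if $\sigma_*C = C$ for all $\sigma \in \mathcal{V}$. For $A\in \mathrm{GL}(3,\mathbb{C})$ and a homogeneous polynomial $f$, $f^A(\mathbf{x}) = f(A\mathbf{x})$; $f$ is $\widetilde{\mathcal{V}}$-invariant if $f^A = f$ for all $A\in\widetilde{\mathcal{V}}$. *)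

theory Defs
  imports "HOL-Analysis.Analysis"
begin

definition rho :: complex where "rho = cis (2 * pi / 3)"
definition tau :: complex where "tau = complex_of_real ((1 + sqrt 5) / 2)"

definition mat3 :: "complex list list \<Rightarrow> complex^3^3" where
  "mat3 rs = vector (map vector rs)"

definition Zm :: "complex^3^3" where "Zm = mat3 [[-1,0,0],[0,1,0],[0,0,-1]]"
definition Tm :: "complex^3^3" where "Tm = mat3 [[0,0,1],[1,0,0],[0,1,0]]"
definition Qm :: "complex^3^3" where "Qm = mat3 [[1,0,0],[0,0,rho^2],[0,-rho,0]]"
definition Pm :: "complex^3^3" where
  "Pm = (1/2) *\<^sub>R mat3 [[1, inverse tau, -tau],[inverse tau, tau, 1],[tau, -1, inverse tau]]"

inductive_set Vtilde :: "(complex^3^3) set" where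
  one: "mat 1 \<in> Vtilde"
| mul: "A \<in> {Zm, Tm, Qm, Pm} \<Longrightarrow> B \<in> Vtilde \<Longrightarrow> A ** B \<in> Vtilde"
| mul_inv: "A \<in> {Zm, Tm, Qm, Pm} \<Longrightarrow> B \<in> Vtilde \<Longrightarrow> matrix_inv A ** B \<in> Vtilde"

text \<open>Homogeneous polynomials of degree d in three variables, viewed as polynomial
  functions on C^3 (over C a polynomial is determined by its function):
  the sum over all monomials x1^i x2^j x3^(d-i-j) with coefficients c i j.\<close>
definition hom_poly :: "nat \<Rightarrow> (complex^3 \<Rightarrow> complex) \<Rightarrow> bool" where
  "hom_poly d f \<longleftrightarrow> (\<exists>c :: nat \<Rightarrow> nat \<Rightarrow> complex.
      f = (\<lambda>x. \<Sum>i\<le>d. \<Sum>j\<le>d - i. c i j * (x$1)^i * (x$2)^j * (x$3)^(d - i - j)))"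

definition poly_act :: "(complex^3 \<Rightarrow> complex) \<Rightarrow> complex^3^3 \<Rightarrow> (complex^3 \<Rightarrow> complex)" where
  "poly_act f A = (\<lambda>x. f (A *v x))"

text \<open>A projective plane curve (nonzero effective divisor on P^2) is div(f) for a
  nonzero homogeneous f of positive degree, and div(f) = div(g) iff g is a nonzero
  scalar multiple of f. We represent the divisor div(f) by the set of its defining
  polynomials.\<close>
definition curve_of :: "(complex^3 \<Rightarrow> complex) \<Rightarrow> (complex^3 \<Rightarrow> complex) set" where
  "curve_of f = {g. \<exists>c. c \<noteq> 0 \<and> g = (\<lambda>x. c * f x)}"

definition is_plane_curve :: "(complex^3 \<Rightarrow> complex) set \<Rightarrow> bool" where
  "is_plane_curve C \<longleftrightarrow> (\<exists>d f. d \<ge> 1 \<and> hom_poly d f \<and> f \<noteq> (\<lambda>_. 0) \<and> C = curve_of f)"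

definition defined_by :: "(complex^3 \<Rightarrow> complex) set \<Rightarrow> (complex^3 \<Rightarrow> complex) \<Rightarrow> bool" where
  "defined_by C f \<longleftrightarrow> C = curve_of f"

text \<open>Push-forward of a curve under the projectivity [A]: if C = div(f) then
  [A]_* C = div(f^(A^-1)).\<close>
definition push_curve :: "complex^3^3 \<Rightarrow> (complex^3 \<Rightarrow> complex) set \<Rightarrow> (complex^3 \<Rightarrow> complex) set" where
  "push_curve A C = (\<lambda>g. poly_act g (matrix_inv A)) ` C"

text \<open>Invariance under the image V of Vtilde in PGL(3,C).\<close>
definition V_invariant_curve :: "(complex^3 \<Rightarrow> complex) set \<Rightarrow> bool" where
  "V_invariant_curve C \<longleftrightarrow> (\<forall>A\<in>Vtilde. push_curve A C = C)"

definition Vtilde_invariant_poly :: "(complex^3 \<Rightarrow> complex) \<Rightarrow> bool" where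
  "Vtilde_invariant_poly f \<longleftrightarrow> (\<forall>A\<in>Vtilde. poly_act f A = f)"

end

theory Submission
  imports Defs
begin

lemma mat3_mult: "mat3 [[a11,a12,a13],[a21,a22,a23],[a31,a32,a33]] ** mat3 [[b11,b12,b13],[b21,b22,b23],[b31,b32,b33]]
  = mat3 [[a11*b11+a12*b21+a13*b31, a11*b12+a12*b22+a13*b32, a11*b13+a12*b23+a13*b33],
          [a21*b11+a22*b21+a23*b31, a21*b12+a22*b22+a23*b32, a21*b13+a22*b23+a23*b33],
          [a31*b11+a32*b21+a33*b31, a31*b12+a32*b22+a33*b32, a31*b13+a32*b23+a33*b33]]"
  unfolding mat3_def matrix_matrix_mult_def by (simp add: vec_eq_iff forall_3 sum_3 vector_3)

lemma mat3_eq: "(mat3 [[a11,a12,a13],[a21,a22,a23],[a31,a32,a33]] = mat3 [[b11,b12,b13],[b21,b22,b23],[b31,b32,b33]])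
  \<longleftrightarrow> a11=b11 \<and> a12=b12 \<and> a13=b13 \<and> a21=b21 \<and> a22=b22 \<and> a23=b23 \<and> a31=b31 \<and> a32=b32 \<and> a33=b33"
  unfolding mat3_def by (simp add: vec_eq_iff forall_3 vector_3)

lemma mat1_eq: "(mat 1 :: complex^3^3) = mat3 [[1,0,0],[0,1,0],[0,0,1]]"
  unfolding mat3_def by (simp add: vec_eq_iff forall_3 vector_3 mat_def)

lemma tau_sq: "tau^2 = tau + 1"
proof -
  have "((1 + sqrt 5) / 2)^2 = (1 + sqrt 5)/2 + (1::real)"
    by (simp add: power2_eq_square field_simps)
  then show ?thesis unfolding tau_def by (metis of_real_1 of_real_add of_real_power)
qed

lemma tau_nz: "tau \<noteq> 0"
proof -
  have "(1 + sqrt 5) / 2 > (0::real)" by (simp add: add_pos_nonneg)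
  then show ?thesis unfolding tau_def by (metis of_real_eq_0_iff less_irrefl)
qed

lemma tau_inv: "inverse tau = tau - 1"
  using tau_sq tau_nz by (simp add: field_simps power2_eq_square)

lemma rho_eq: "rho^2 + rho + 1 = 0"
proof -
  have e: "2*pi/3 + 2*pi/3 + 2*pi/3 = 2*pi" by simp
  have "rho ^ 3 = 1" unfolding rho_def power3_eq_cube cis_mult e by (rule cis_2pi)
  moreover have "rho \<noteq> 1"
  proof
    assume "rho = 1"
    then have "Im rho = 0" by simp
    moreover have "sin (2*pi/3) > 0" by (rule sin_gt_zero) auto
    ultimately show False unfolding rho_def by simp
  qed
  moreover have "rho^3 - 1 = (rho - 1) * (rho^2 + rho + 1)" by (simp add: algebra_simps power2_eq_square power3_eq_cube)
  ultimately show ?thesis by simp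
qed

lemma Pm_eq: "Pm = mat3 [[1/2, (tau-1)/2, -tau/2],[(tau-1)/2, tau/2, 1/2],[tau/2, -1/2, (tau-1)/2]]"
  unfolding Pm_def mat3_def tau_inv by (simp add: vec_eq_iff forall_3 vector_3) (simp add: scaleR_conv_of_real)




lemma Zm_eq2: "Zm = mat3 [[(-1), 0, 0], [0, (1), 0], [0, 0, (-1)]]"
  unfolding Zm_def mat3_eq by simp

lemma Tm_eq2: "Tm = mat3 [[0, 0, (1)], [(1), 0, 0], [0, (1), 0]]"
  unfolding Tm_def mat3_eq by simp

lemma Qm_eq2g: fixes r :: complex assumes "r^2 + r + 1 = 0" shows "mat3 [[1,0,0],[0,0,r^2],[0,-r,0]] = mat3 [[(1), 0, 0], [0, 0, (-1) + (-1)*r], [0, (-1)*r, 0]]"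
  unfolding mat3_eq by (intro conjI; ((simp; fail) | use assms in algebra | algebra))

lemma Qm_eq2: "Qm = mat3 [[(1), 0, 0], [0, 0, (-1) + (-1)*rho], [0, (-1)*rho, 0]]"
  unfolding Qm_def using Qm_eq2g[OF rho_eq] .

lemma Pm_eq2: "Pm = mat3 [[(1/2), (-1/2) + (1/2)*tau, (-1/2)*tau], [(-1/2) + (1/2)*tau, (1/2)*tau, (1/2)], [(1/2)*tau, (-1/2), (-1/2) + (1/2)*tau]]"
  unfolding Pm_eq mat3_eq by simp

lemma R1: "Zm ** Zm = mat 1"
  unfolding Zm_def mat1_eq mat3_mult mat3_eq by simp
lemma R2: "Tm ** Tm ** Tm = mat 1"
  unfolding Tm_def mat1_eq mat3_mult mat3_eq by simp
lemma R3: "Zm ** Tm ** Zm ** Tm ** Zm ** Tm = mat 1"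
  unfolding Zm_def Tm_def mat1_eq mat3_mult mat3_eq by simp

lemma R4_1:
  fixes t r :: complex assumes "t^2 = t + 1" "r^2 + r + 1 = 0"
  shows "mat3 [[(1/2), (-1/2) + (1/2)*t, (-1/2)*t], [(-1/2) + (1/2)*t, (1/2)*t, (1/2)], [(1/2)*t, (-1/2), (-1/2) + (1/2)*t]] ** mat3 [[(1/2), (-1/2) + (1/2)*t, (-1/2)*t], [(-1/2) + (1/2)*t, (1/2)*t, (1/2)], [(1/2)*t, (-1/2), (-1/2) + (1/2)*t]] = mat3 [[(1/2) + (-1/2)*t, (1/2)*t, (-1/2)], [(1/2)*t, (1/2), (-1/2) + (1/2)*t], [(1/2), (1/2) + (-1/2)*t, (-1/2)*t]]"
  unfolding mat3_mult mat3_eq by (intro conjI; ((simp; fail) | use assms in algebra | algebra))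

lemma R4_2:
  fixes t r :: complex assumes "t^2 = t + 1" "r^2 + r + 1 = 0"
  shows "mat3 [[(1/2) + (-1/2)*t, (1/2)*t, (-1/2)], [(1/2)*t, (1/2), (-1/2) + (1/2)*t], [(1/2), (1/2) + (-1/2)*t, (-1/2)*t]] ** mat3 [[(1/2), (-1/2) + (1/2)*t, (-1/2)*t], [(-1/2) + (1/2)*t, (1/2)*t, (1/2)], [(1/2)*t, (-1/2), (-1/2) + (1/2)*t]] = mat3 [[(1/2) + (-1/2)*t, (1/2)*t, (1/2)], [(1/2)*t, (1/2), (1/2) + (-1/2)*t], [(-1/2), (-1/2) + (1/2)*t, (-1/2)*t]]"
  unfolding mat3_mult mat3_eq by (intro conjI; ((simp; fail) | use assms in algebra | algebra))

lemma R4_3: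
  fixes t r :: complex assumes "t^2 = t + 1" "r^2 + r + 1 = 0"
  shows "mat3 [[(1/2) + (-1/2)*t, (1/2)*t, (1/2)], [(1/2)*t, (1/2), (1/2) + (-1/2)*t], [(-1/2), (-1/2) + (1/2)*t, (-1/2)*t]] ** mat3 [[(1/2), (-1/2) + (1/2)*t, (-1/2)*t], [(-1/2) + (1/2)*t, (1/2)*t, (1/2)], [(1/2)*t, (-1/2), (-1/2) + (1/2)*t]] = mat3 [[(1/2), (-1/2) + (1/2)*t, (1/2)*t], [(-1/2) + (1/2)*t, (1/2)*t, (-1/2)], [(-1/2)*t, (1/2), (-1/2) + (1/2)*t]]"
  unfolding mat3_mult mat3_eq by (intro conjI; ((simp; fail) | use assms in algebra | algebra))

lemma R4_4:
  fixes t r :: complex assumes "t^2 = t + 1" "r^2 + r + 1 = 0"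
  shows "mat3 [[(1/2), (-1/2) + (1/2)*t, (1/2)*t], [(-1/2) + (1/2)*t, (1/2)*t, (-1/2)], [(-1/2)*t, (1/2), (-1/2) + (1/2)*t]] ** mat3 [[(1/2), (-1/2) + (1/2)*t, (-1/2)*t], [(-1/2) + (1/2)*t, (1/2)*t, (1/2)], [(1/2)*t, (-1/2), (-1/2) + (1/2)*t]] = mat3 [[(1), 0, 0], [0, (1), 0], [0, 0, (1)]]"
  unfolding mat3_mult mat3_eq by (intro conjI; ((simp; fail) | use assms in algebra | algebra))

lemma R4: "Pm ** Pm ** Pm ** Pm ** Pm = mat 1"
  unfolding Zm_eq2 Tm_eq2 Qm_eq2 Pm_eq2 R4_1[OF tau_sq rho_eq] R4_2[OF tau_sq rho_eq] R4_3[OF tau_sq rho_eq] R4_4[OF tau_sq rho_eq] mat1_eq ..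

lemma R5_1:
  fixes t r :: complex assumes "t^2 = t + 1" "r^2 + r + 1 = 0"
  shows "mat3 [[0, 0, (1)], [(1), 0, 0], [0, (1), 0]] ** mat3 [[(1/2), (-1/2) + (1/2)*t, (-1/2)*t], [(-1/2) + (1/2)*t, (1/2)*t, (1/2)], [(1/2)*t, (-1/2), (-1/2) + (1/2)*t]] = mat3 [[(1/2)*t, (-1/2), (-1/2) + (1/2)*t], [(1/2), (-1/2) + (1/2)*t, (-1/2)*t], [(-1/2) + (1/2)*t, (1/2)*t, (1/2)]]"
  unfolding mat3_mult mat3_eq by (intro conjI; ((simp; fail) | use assms in algebra | algebra))

lemma R5_2:
  fixes t r :: complex assumes "t^2 = t + 1" "r^2 + r + 1 = 0"
  shows "mat3 [[(1/2)*t, (-1/2), (-1/2) + (1/2)*t], [(1/2), (-1/2) + (1/2)*t, (-1/2)*t], [(-1/2) + (1/2)*t, (1/2)*t, (1/2)]] ** mat3 [[0, 0, (1)], [(1), 0, 0], [0, (1), 0]] = mat3 [[(-1/2), (-1/2) + (1/2)*t, (1/2)*t], [(-1/2) + (1/2)*t, (-1/2)*t, (1/2)], [(1/2)*t, (1/2), (-1/2) + (1/2)*t]]"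
  unfolding mat3_mult mat3_eq by (intro conjI; ((simp; fail) | use assms in algebra | algebra))

lemma R5_3:
  fixes t r :: complex assumes "t^2 = t + 1" "r^2 + r + 1 = 0"
  shows "mat3 [[(-1/2), (-1/2) + (1/2)*t, (1/2)*t], [(-1/2) + (1/2)*t, (-1/2)*t, (1/2)], [(1/2)*t, (1/2), (-1/2) + (1/2)*t]] ** mat3 [[(1/2), (-1/2) + (1/2)*t, (-1/2)*t], [(-1/2) + (1/2)*t, (1/2)*t, (1/2)], [(1/2)*t, (-1/2), (-1/2) + (1/2)*t]] = mat3 [[(1/2), (1/2) + (-1/2)*t, (1/2)*t], [(-1/2) + (1/2)*t, (-1/2)*t, (-1/2)], [(1/2)*t, (1/2), (1/2) + (-1/2)*t]]"
  unfolding mat3_mult mat3_eq by (intro conjI; ((simp; fail) | use assms in algebra | algebra))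

lemma R5_4:
  fixes t r :: complex assumes "t^2 = t + 1" "r^2 + r + 1 = 0"
  shows "mat3 [[(1/2), (1/2) + (-1/2)*t, (1/2)*t], [(-1/2) + (1/2)*t, (-1/2)*t, (-1/2)], [(1/2)*t, (1/2), (1/2) + (-1/2)*t]] ** mat3 [[0, 0, (1)], [(1), 0, 0], [0, (1), 0]] = mat3 [[(1/2) + (-1/2)*t, (1/2)*t, (1/2)], [(-1/2)*t, (-1/2), (-1/2) + (1/2)*t], [(1/2), (1/2) + (-1/2)*t, (1/2)*t]]"
  unfolding mat3_mult mat3_eq by (intro conjI; ((simp; fail) | use assms in algebra | algebra))

lemma R5_5:
  fixes t r :: complex assumes "t^2 = t + 1" "r^2 + r + 1 = 0"
  shows "mat3 [[(1/2) + (-1/2)*t, (1/2)*t, (1/2)], [(-1/2)*t, (-1/2), (-1/2) + (1/2)*t], [(1/2), (1/2) + (-1/2)*t, (1/2)*t]] ** mat3 [[(1/2), (-1/2) + (1/2)*t, (-1/2)*t], [(-1/2) + (1/2)*t, (1/2)*t, (1/2)], [(1/2)*t, (-1/2), (-1/2) + (1/2)*t]] = mat3 [[(1/2), (-1/2) + (1/2)*t, (1/2)*t], [(1/2) + (-1/2)*t, (-1/2)*t, (1/2)], [(1/2)*t, (-1/2), (1/2) + (-1/2)*t]]"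
  unfolding mat3_mult mat3_eq by (intro conjI; ((simp; fail) | use assms in algebra | algebra))

lemma R5_6:
  fixes t r :: complex assumes "t^2 = t + 1" "r^2 + r + 1 = 0"
  shows "mat3 [[(1/2), (-1/2) + (1/2)*t, (1/2)*t], [(1/2) + (-1/2)*t, (-1/2)*t, (1/2)], [(1/2)*t, (-1/2), (1/2) + (-1/2)*t]] ** mat3 [[0, 0, (1)], [(1), 0, 0], [0, (1), 0]] = mat3 [[(-1/2) + (1/2)*t, (1/2)*t, (1/2)], [(-1/2)*t, (1/2), (1/2) + (-1/2)*t], [(-1/2), (1/2) + (-1/2)*t, (1/2)*t]]"
  unfolding mat3_mult mat3_eq by (intro conjI; ((simp; fail) | use assms in algebra | algebra))

lemma R5_7:
  fixes t r :: complex assumes "t^2 = t + 1" "r^2 + r + 1 = 0"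
  shows "mat3 [[(-1/2) + (1/2)*t, (1/2)*t, (1/2)], [(-1/2)*t, (1/2), (1/2) + (-1/2)*t], [(-1/2), (1/2) + (-1/2)*t, (1/2)*t]] ** mat3 [[(1/2), (-1/2) + (1/2)*t, (-1/2)*t], [(-1/2) + (1/2)*t, (1/2)*t, (1/2)], [(1/2)*t, (-1/2), (-1/2) + (1/2)*t]] = mat3 [[(1/2)*t, (1/2), (-1/2) + (1/2)*t], [(-1/2), (-1/2) + (1/2)*t, (1/2)*t], [(-1/2) + (1/2)*t, (-1/2)*t, (1/2)]]"
  unfolding mat3_mult mat3_eq by (intro conjI; ((simp; fail) | use assms in algebra | algebra))

lemma R5_8:
  fixes t r :: complex assumes "t^2 = t + 1" "r^2 + r + 1 = 0"
  shows "mat3 [[(1/2)*t, (1/2), (-1/2) + (1/2)*t], [(-1/2), (-1/2) + (1/2)*t, (1/2)*t], [(-1/2) + (1/2)*t, (-1/2)*t, (1/2)]] ** mat3 [[0, 0, (1)], [(1), 0, 0], [0, (1), 0]] = mat3 [[(1/2), (-1/2) + (1/2)*t, (1/2)*t], [(-1/2) + (1/2)*t, (1/2)*t, (-1/2)], [(-1/2)*t, (1/2), (-1/2) + (1/2)*t]]"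
  unfolding mat3_mult mat3_eq by (intro conjI; ((simp; fail) | use assms in algebra | algebra))

lemma R5_9:
  fixes t r :: complex assumes "t^2 = t + 1" "r^2 + r + 1 = 0"
  shows "mat3 [[(1/2), (-1/2) + (1/2)*t, (1/2)*t], [(-1/2) + (1/2)*t, (1/2)*t, (-1/2)], [(-1/2)*t, (1/2), (-1/2) + (1/2)*t]] ** mat3 [[(1/2), (-1/2) + (1/2)*t, (-1/2)*t], [(-1/2) + (1/2)*t, (1/2)*t, (1/2)], [(1/2)*t, (-1/2), (-1/2) + (1/2)*t]] = mat3 [[(1), 0, 0], [0, (1), 0], [0, 0, (1)]]"
  unfolding mat3_mult mat3_eq by (intro conjI; ((simp; fail) | use assms in algebra | algebra))

lemma R5: "Tm ** Pm ** Tm ** Pm ** Tm ** Pm ** Tm ** Pm ** Tm ** Pm = mat 1"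
  unfolding Zm_eq2 Tm_eq2 Qm_eq2 Pm_eq2 R5_1[OF tau_sq rho_eq] R5_2[OF tau_sq rho_eq] R5_3[OF tau_sq rho_eq] R5_4[OF tau_sq rho_eq] R5_5[OF tau_sq rho_eq] R5_6[OF tau_sq rho_eq] R5_7[OF tau_sq rho_eq] R5_8[OF tau_sq rho_eq] R5_9[OF tau_sq rho_eq] mat1_eq ..

lemma R6_1:
  fixes t r :: complex assumes "t^2 = t + 1" "r^2 + r + 1 = 0"
  shows "mat3 [[(-1), 0, 0], [0, (1), 0], [0, 0, (-1)]] ** mat3 [[(1/2), (-1/2) + (1/2)*t, (-1/2)*t], [(-1/2) + (1/2)*t, (1/2)*t, (1/2)], [(1/2)*t, (-1/2), (-1/2) + (1/2)*t]] = mat3 [[(-1/2), (1/2) + (-1/2)*t, (1/2)*t], [(-1/2) + (1/2)*t, (1/2)*t, (1/2)], [(-1/2)*t, (1/2), (1/2) + (-1/2)*t]]"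
  unfolding mat3_mult mat3_eq by (intro conjI; ((simp; fail) | use assms in algebra | algebra))

lemma R6_2:
  fixes t r :: complex assumes "t^2 = t + 1" "r^2 + r + 1 = 0"
  shows "mat3 [[(-1/2), (1/2) + (-1/2)*t, (1/2)*t], [(-1/2) + (1/2)*t, (1/2)*t, (1/2)], [(-1/2)*t, (1/2), (1/2) + (-1/2)*t]] ** mat3 [[(-1), 0, 0], [0, (1), 0], [0, 0, (-1)]] = mat3 [[(1/2), (1/2) + (-1/2)*t, (-1/2)*t], [(1/2) + (-1/2)*t, (1/2)*t, (-1/2)], [(1/2)*t, (1/2), (-1/2) + (1/2)*t]]"
  unfolding mat3_mult mat3_eq by (intro conjI; ((simp; fail) | use assms in algebra | algebra))

lemma R6_3:
  fixes t r :: complex assumes "t^2 = t + 1" "r^2 + r + 1 = 0"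
  shows "mat3 [[(1/2), (1/2) + (-1/2)*t, (-1/2)*t], [(1/2) + (-1/2)*t, (1/2)*t, (-1/2)], [(1/2)*t, (1/2), (-1/2) + (1/2)*t]] ** mat3 [[(1/2), (-1/2) + (1/2)*t, (-1/2)*t], [(-1/2) + (1/2)*t, (1/2)*t, (1/2)], [(1/2)*t, (-1/2), (-1/2) + (1/2)*t]] = mat3 [[(-1/2), (-1/2) + (1/2)*t, (-1/2)*t], [(1/2) + (-1/2)*t, (1/2)*t, (1/2)], [(1/2)*t, (1/2), (1/2) + (-1/2)*t]]"
  unfolding mat3_mult mat3_eq by (intro conjI; ((simp; fail) | use assms in algebra | algebra))

lemma R6_4:
  fixes t r :: complex assumes "t^2 = t + 1" "r^2 + r + 1 = 0"
  shows "mat3 [[(-1/2), (-1/2) + (1/2)*t, (-1/2)*t], [(1/2) + (-1/2)*t, (1/2)*t, (1/2)], [(1/2)*t, (1/2), (1/2) + (-1/2)*t]] ** mat3 [[(-1), 0, 0], [0, (1), 0], [0, 0, (-1)]] = mat3 [[(1/2), (-1/2) + (1/2)*t, (1/2)*t], [(-1/2) + (1/2)*t, (1/2)*t, (-1/2)], [(-1/2)*t, (1/2), (-1/2) + (1/2)*t]]"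
  unfolding mat3_mult mat3_eq by (intro conjI; ((simp; fail) | use assms in algebra | algebra))

lemma R6_5:
  fixes t r :: complex assumes "t^2 = t + 1" "r^2 + r + 1 = 0"
  shows "mat3 [[(1/2), (-1/2) + (1/2)*t, (1/2)*t], [(-1/2) + (1/2)*t, (1/2)*t, (-1/2)], [(-1/2)*t, (1/2), (-1/2) + (1/2)*t]] ** mat3 [[(1/2), (-1/2) + (1/2)*t, (-1/2)*t], [(-1/2) + (1/2)*t, (1/2)*t, (1/2)], [(1/2)*t, (-1/2), (-1/2) + (1/2)*t]] = mat3 [[(1), 0, 0], [0, (1), 0], [0, 0, (1)]]"
  unfolding mat3_mult mat3_eq by (intro conjI; ((simp; fail) | use assms in algebra | algebra))

lemma R6: "Zm ** Pm ** Zm ** Pm ** Zm ** Pm = mat 1"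
  unfolding Zm_eq2 Tm_eq2 Qm_eq2 Pm_eq2 R6_1[OF tau_sq rho_eq] R6_2[OF tau_sq rho_eq] R6_3[OF tau_sq rho_eq] R6_4[OF tau_sq rho_eq] R6_5[OF tau_sq rho_eq] mat1_eq ..

lemma R7_1:
  fixes t r :: complex assumes "t^2 = t + 1" "r^2 + r + 1 = 0"
  shows "mat3 [[(1), 0, 0], [0, 0, (-1) + (-1)*r], [0, (-1)*r, 0]] ** mat3 [[(1), 0, 0], [0, 0, (-1) + (-1)*r], [0, (-1)*r, 0]] = mat3 [[(1), 0, 0], [0, (-1), 0], [0, 0, (-1)]]"
  unfolding mat3_mult mat3_eq by (intro conjI; ((simp; fail) | use assms in algebra | algebra))

lemma R7_2:
  fixes t r :: complex assumes "t^2 = t + 1" "r^2 + r + 1 = 0"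
  shows "mat3 [[(1), 0, 0], [0, (-1), 0], [0, 0, (-1)]] ** mat3 [[(1), 0, 0], [0, 0, (-1) + (-1)*r], [0, (-1)*r, 0]] = mat3 [[(1), 0, 0], [0, 0, (1) + (1)*r], [0, (1)*r, 0]]"
  unfolding mat3_mult mat3_eq by (intro conjI; ((simp; fail) | use assms in algebra | algebra))

lemma R7_3:
  fixes t r :: complex assumes "t^2 = t + 1" "r^2 + r + 1 = 0"
  shows "mat3 [[(1), 0, 0], [0, 0, (1) + (1)*r], [0, (1)*r, 0]] ** mat3 [[(1), 0, 0], [0, 0, (-1) + (-1)*r], [0, (-1)*r, 0]] = mat3 [[(1), 0, 0], [0, (1), 0], [0, 0, (1)]]"
  unfolding mat3_mult mat3_eq by (intro conjI; ((simp; fail) | use assms in algebra | algebra))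

lemma R7: "Qm ** Qm ** Qm ** Qm = mat 1"
  unfolding Zm_eq2 Tm_eq2 Qm_eq2 Pm_eq2 R7_1[OF tau_sq rho_eq] R7_2[OF tau_sq rho_eq] R7_3[OF tau_sq rho_eq] mat1_eq ..

lemma R8_1:
  fixes t r :: complex assumes "t^2 = t + 1" "r^2 + r + 1 = 0"
  shows "mat3 [[0, 0, (1)], [(1), 0, 0], [0, (1), 0]] ** mat3 [[(1/2), (-1/2) + (1/2)*t, (-1/2)*t], [(-1/2) + (1/2)*t, (1/2)*t, (1/2)], [(1/2)*t, (-1/2), (-1/2) + (1/2)*t]] = mat3 [[(1/2)*t, (-1/2), (-1/2) + (1/2)*t], [(1/2), (-1/2) + (1/2)*t, (-1/2)*t], [(-1/2) + (1/2)*t, (1/2)*t, (1/2)]]"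
  unfolding mat3_mult mat3_eq by (intro conjI; ((simp; fail) | use assms in algebra | algebra))

lemma R8_2:
  fixes t r :: complex assumes "t^2 = t + 1" "r^2 + r + 1 = 0"
  shows "mat3 [[(1/2)*t, (-1/2), (-1/2) + (1/2)*t], [(1/2), (-1/2) + (1/2)*t, (-1/2)*t], [(-1/2) + (1/2)*t, (1/2)*t, (1/2)]] ** mat3 [[(1), 0, 0], [0, 0, (-1) + (-1)*r], [0, (-1)*r, 0]] = mat3 [[(1/2)*t, (1/2)*r + (-1/2)*t*r, (1/2) + (1/2)*r], [(1/2), (1/2)*t*r, (1/2) + (-1/2)*t + (1/2)*r + (-1/2)*t*r], [(-1/2) + (1/2)*t, (-1/2)*r, (-1/2)*t + (-1/2)*t*r]]"
  unfolding mat3_mult mat3_eq by (intro conjI; ((simp; fail) | use assms in algebra | algebra))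

lemma R8_3:
  fixes t r :: complex assumes "t^2 = t + 1" "r^2 + r + 1 = 0"
  shows "mat3 [[(1/2)*t, (1/2)*r + (-1/2)*t*r, (1/2) + (1/2)*r], [(1/2), (1/2)*t*r, (1/2) + (-1/2)*t + (1/2)*r + (-1/2)*t*r], [(-1/2) + (1/2)*t, (-1/2)*r, (-1/2)*t + (-1/2)*t*r]] ** mat3 [[0, 0, (1)], [(1), 0, 0], [0, (1), 0]] = mat3 [[(1/2)*r + (-1/2)*t*r, (1/2) + (1/2)*r, (1/2)*t], [(1/2)*t*r, (1/2) + (-1/2)*t + (1/2)*r + (-1/2)*t*r, (1/2)], [(-1/2)*r, (-1/2)*t + (-1/2)*t*r, (-1/2) + (1/2)*t]]"
  unfolding mat3_mult mat3_eq by (intro conjI; ((simp; fail) | use assms in algebra | algebra))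

lemma R8_4:
  fixes t r :: complex assumes "t^2 = t + 1" "r^2 + r + 1 = 0"
  shows "mat3 [[(1/2)*r + (-1/2)*t*r, (1/2) + (1/2)*r, (1/2)*t], [(1/2)*t*r, (1/2) + (-1/2)*t + (1/2)*r + (-1/2)*t*r, (1/2)], [(-1/2)*r, (-1/2)*t + (-1/2)*t*r, (-1/2) + (1/2)*t]] ** mat3 [[(1/2), (-1/2) + (1/2)*t, (-1/2)*t], [(-1/2) + (1/2)*t, (1/2)*t, (1/2)], [(1/2)*t, (-1/2), (-1/2) + (1/2)*t]] = mat3 [[(1/2)*t, (-1/2)*r + (1/2)*t*r, (1/2) + (1/2)*r], [(-1/2) + (1/2)*t + (-1/2)*r + (1/2)*t*r, (-1/2), (-1/2)*t*r], [(-1/2)*r, (-1/2)*t + (-1/2)*t*r, (1/2) + (-1/2)*t]]"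
  unfolding mat3_mult mat3_eq by (intro conjI; ((simp; fail) | use assms in algebra | algebra))

lemma R8_5:
  fixes t r :: complex assumes "t^2 = t + 1" "r^2 + r + 1 = 0"
  shows "mat3 [[(1/2)*t, (-1/2)*r + (1/2)*t*r, (1/2) + (1/2)*r], [(-1/2) + (1/2)*t + (-1/2)*r + (1/2)*t*r, (-1/2), (-1/2)*t*r], [(-1/2)*r, (-1/2)*t + (-1/2)*t*r, (1/2) + (-1/2)*t]] ** mat3 [[(1), 0, 0], [0, 0, (-1) + (-1)*r], [0, (-1)*r, 0]] = mat3 [[(1/2)*t, (1/2), (-1/2) + (1/2)*t], [(-1/2) + (1/2)*t + (-1/2)*r + (1/2)*t*r, (-1/2)*t + (-1/2)*t*r, (1/2) + (1/2)*r], [(-1/2)*r, (-1/2)*r + (1/2)*t*r, (1/2)*t*r]]"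
  unfolding mat3_mult mat3_eq by (intro conjI; ((simp; fail) | use assms in algebra | algebra))

lemma R8_6:
  fixes t r :: complex assumes "t^2 = t + 1" "r^2 + r + 1 = 0"
  shows "mat3 [[(1/2)*t, (1/2), (-1/2) + (1/2)*t], [(-1/2) + (1/2)*t + (-1/2)*r + (1/2)*t*r, (-1/2)*t + (-1/2)*t*r, (1/2) + (1/2)*r], [(-1/2)*r, (-1/2)*r + (1/2)*t*r, (1/2)*t*r]] ** mat3 [[0, 0, (1)], [(1), 0, 0], [0, (1), 0]] = mat3 [[(1/2), (-1/2) + (1/2)*t, (1/2)*t], [(-1/2)*t + (-1/2)*t*r, (1/2) + (1/2)*r, (-1/2) + (1/2)*t + (-1/2)*r + (1/2)*t*r], [(-1/2)*r + (1/2)*t*r, (1/2)*t*r, (-1/2)*r]]"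
  unfolding mat3_mult mat3_eq by (intro conjI; ((simp; fail) | use assms in algebra | algebra))

lemma R8_7:
  fixes t r :: complex assumes "t^2 = t + 1" "r^2 + r + 1 = 0"
  shows "mat3 [[(1/2), (-1/2) + (1/2)*t, (1/2)*t], [(-1/2)*t + (-1/2)*t*r, (1/2) + (1/2)*r, (-1/2) + (1/2)*t + (-1/2)*r + (1/2)*t*r], [(-1/2)*r + (1/2)*t*r, (1/2)*t*r, (-1/2)*r]] ** mat3 [[(1/2), (-1/2) + (1/2)*t, (-1/2)*t], [(-1/2) + (1/2)*t, (1/2)*t, (1/2)], [(1/2)*t, (-1/2), (-1/2) + (1/2)*t]] = mat3 [[(1), 0, 0], [0, 0, (1) + (1)*r], [0, (1)*r, 0]]"
  unfolding mat3_mult mat3_eq by (intro conjI; ((simp; fail) | use assms in algebra | algebra))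

lemma R8_8:
  fixes t r :: complex assumes "t^2 = t + 1" "r^2 + r + 1 = 0"
  shows "mat3 [[(1), 0, 0], [0, 0, (1) + (1)*r], [0, (1)*r, 0]] ** mat3 [[(1), 0, 0], [0, 0, (-1) + (-1)*r], [0, (-1)*r, 0]] = mat3 [[(1), 0, 0], [0, (1), 0], [0, 0, (1)]]"
  unfolding mat3_mult mat3_eq by (intro conjI; ((simp; fail) | use assms in algebra | algebra))

lemma R8: "Tm ** Pm ** Qm ** Tm ** Pm ** Qm ** Tm ** Pm ** Qm = mat 1"
  unfolding Zm_eq2 Tm_eq2 Qm_eq2 Pm_eq2 R8_1[OF tau_sq rho_eq] R8_2[OF tau_sq rho_eq] R8_3[OF tau_sq rho_eq] R8_4[OF tau_sq rho_eq] R8_5[OF tau_sq rho_eq] R8_6[OF tau_sq rho_eq] R8_7[OF tau_sq rho_eq] R8_8[OF tau_sq rho_eq] mat1_eq ..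

lemma inv_witness:
  fixes A B :: "complex^3^3"
  assumes "A ** B = mat 1" "B ** A = mat 1"
  shows "invertible A"
  using assms unfolding invertible_def by blast

lemma invs: "invertible Zm" "invertible Tm" "invertible Qm" "invertible Pm"
proof -
  show "invertible Zm" using R1 by (intro inv_witness[of _ Zm]) auto
  show "invertible Tm" using R2 by (intro inv_witness[of _ "Tm ** Tm"]) (auto simp: matrix_mul_assoc)
  show "invertible Qm" using R7 by (intro inv_witness[of _ "Qm ** Qm ** Qm"]) (auto simp: matrix_mul_assoc)
  show "invertible Pm" using R4 by (intro inv_witness[of _ "Pm ** Pm ** Pm ** Pm"]) (auto simp: matrix_mul_assoc)
qed

lemma inv_props:
  fixes A :: "complex^3^3"
  assumes "invertible A"
  shows "A ** matrix_inv A = mat 1" "matrix_inv A ** A = mat 1"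
proof -
  have "\<exists>A'. A ** A' = mat 1 \<and> A' ** A = mat 1" using assms unfolding invertible_def .
  then have "A ** matrix_inv A = mat 1 \<and> matrix_inv A ** A = mat 1"
    unfolding matrix_inv_def by (rule someI_ex)
  then show "A ** matrix_inv A = mat 1" "matrix_inv A ** A = mat 1" by auto
qed

lemma inv_inv:
  fixes A :: "complex^3^3"
  assumes "invertible A"
  shows "matrix_inv (matrix_inv A) = A"
proof -
  have i1: "invertible (matrix_inv A)" using inv_props[OF assms] by (intro inv_witness[of _ A]) auto
  have "matrix_inv (matrix_inv A) = matrix_inv (matrix_inv A) ** (matrix_inv A ** A)"
    using inv_props[OF assms] by simp
  also have "\<dots> = (matrix_inv (matrix_inv A) ** matrix_inv A) ** A" by (simp add: matrix_mul_assoc)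
  also have "\<dots> = A" using inv_props[OF i1] by simp
  finally show ?thesis .
qed

definition ch :: "(complex^3 \<Rightarrow> complex) \<Rightarrow> complex^3^3 \<Rightarrow> complex \<Rightarrow> bool" where
  "ch f A c \<longleftrightarrow> (\<forall>x. f (A *v x) = c * f x)"

lemma ch_mult: "ch f A a \<Longrightarrow> ch f B b \<Longrightarrow> ch f (A ** B) (a * b)"
  unfolding ch_def by (simp add: matrix_vector_mul_assoc[symmetric])

lemma ch_one:
  assumes "ch f (mat 1) c" "f \<noteq> (\<lambda>_. 0)"
  shows "c = 1"
proof -
  obtain x where "f x \<noteq> 0" using assms(2) by auto
  moreover have "f (mat 1 *v x) = c * f x" using assms(1) unfolding ch_def by blast
  then have "f x = c * f x" by simp
  ultimately show ?thesis by simp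
qed

lemma char_gen:
  assumes S: "S \<in> {Zm, Tm, Qm, Pm}" and inv: "invertible S"
    and VI: "V_invariant_curve (curve_of f)"
  shows "\<exists>c. ch f S c"
proof -
  have "matrix_inv S ** mat 1 \<in> Vtilde" by (rule Vtilde.mul_inv[OF S Vtilde.one])
  then have M: "matrix_inv S \<in> Vtilde" by simp
  have "push_curve (matrix_inv S) (curve_of f) = curve_of f" using VI M unfolding V_invariant_curve_def by blast
  moreover have "f \<in> curve_of f" unfolding curve_of_def by (rule CollectI, rule exI[of _ 1]) simp
  ultimately have "poly_act f (matrix_inv (matrix_inv S)) \<in> curve_of f"
    unfolding push_curve_def by (metis image_eqI)
  then have "poly_act f S \<in> curve_of f" using inv_inv[OF inv] by simp
  then obtain c where "poly_act f S = (\<lambda>x. c * f x)" unfolding curve_of_def by blast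
  then have "ch f S c" unfolding ch_def poly_act_def by metis
  then show ?thesis by blast
qed

theorem mainTheorem9:
  assumes "is_plane_curve C" and "V_invariant_curve C"
  shows "\<exists>d f. hom_poly d f \<and> defined_by C f \<and> Vtilde_invariant_poly f"
proof -
  obtain d f where hf: "hom_poly d f" and nz: "f \<noteq> (\<lambda>_. 0)" and C: "C = curve_of f"
    using assms(1) unfolding is_plane_curve_def by blast
  have VI: "V_invariant_curve (curve_of f)" using assms(2) C by simp
  obtain cz where cz: "ch f Zm cz" using char_gen[OF _ invs(1) VI] by auto
  obtain ct where ct: "ch f Tm ct" using char_gen[OF _ invs(2) VI] by auto
  obtain cq where cq: "ch f Qm cq" using char_gen[OF _ invs(3) VI] by auto
  obtain cp where cp: "ch f Pm cp" using char_gen[OF _ invs(4) VI] by auto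
  have e1: "cz * cz = 1" using ch_one[OF _ nz] ch_mult[OF cz cz] R1 by metis
  have e2: "ct * ct * ct = 1" using ch_one[OF _ nz] ch_mult[OF ch_mult[OF ct ct] ct] R2 by metis
  have e3: "cz * ct * cz * ct * cz * ct = 1"
    using ch_one[OF _ nz] ch_mult[OF ch_mult[OF ch_mult[OF ch_mult[OF ch_mult[OF cz ct] cz] ct] cz] ct] R3 by metis
  have e4: "cp * cp * cp * cp * cp = 1"
    using ch_one[OF _ nz] ch_mult[OF ch_mult[OF ch_mult[OF ch_mult[OF cp cp] cp] cp] cp] R4 by metis
  have e5: "ct * cp * ct * cp * ct * cp * ct * cp * ct * cp = 1"
    using ch_one[OF _ nz] ch_mult[OF ch_mult[OF ch_mult[OF ch_mult[OF ch_mult[OF ch_mult[OF ch_mult[OF ch_mult[OF ch_mult[OF ct cp] ct] cp] ct] cp] ct] cp] ct] cp] R5 by metis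
  have e6: "cz * cp * cz * cp * cz * cp = 1"
    using ch_one[OF _ nz] ch_mult[OF ch_mult[OF ch_mult[OF ch_mult[OF ch_mult[OF cz cp] cz] cp] cz] cp] R6 by metis
  have e7: "cq * cq * cq * cq = 1"
    using ch_one[OF _ nz] ch_mult[OF ch_mult[OF ch_mult[OF cq cq] cq] cq] R7 by metis
  have e8: "ct * cp * cq * ct * cp * cq * ct * cp * cq = 1"
    using ch_one[OF _ nz] ch_mult[OF ch_mult[OF ch_mult[OF ch_mult[OF ch_mult[OF ch_mult[OF ch_mult[OF ch_mult[OF ct cp] cq] ct] cp] cq] ct] cp] cq] R8 by metis
  have z1: "cz = 1" using e1 e2 e3 by algebra
  have t1: "ct = 1" using e2 e4 e5 by algebra
  have p1: "cp = 1" using z1 e4 e6 by algebra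
  have q1: "cq = 1" using t1 p1 e7 e8 by algebra
  have gen1: "ch f A 1" if "A \<in> {Zm, Tm, Qm, Pm}" for A
    using that cz ct cq cp z1 t1 p1 q1 by auto
  have ginv: "invertible A" if "A \<in> {Zm, Tm, Qm, Pm}" for A
    using that invs by auto
  have "poly_act f A = f" if "A \<in> Vtilde" for A
    using that
  proof (induction rule: Vtilde.induct)
    case one
    then show ?case unfolding poly_act_def by simp
  next
    case (mul A B)
    have "f ((A ** B) *v x) = f x" for x
    proof -
      have "f ((A ** B) *v x) = f (A *v (B *v x))" by (simp add: matrix_vector_mul_assoc)
      also have "\<dots> = f (B *v x)" using gen1[OF mul(1)] unfolding ch_def by simp
      also have "\<dots> = f x" using mul(3) unfolding poly_act_def by metis
      finally show ?thesis .
    qed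
    then show ?case unfolding poly_act_def by auto
  next
    case (mul_inv A B)
    have "f ((matrix_inv A ** B) *v x) = f x" for x
    proof -
      have "f ((matrix_inv A ** B) *v x) = f (A *v ((matrix_inv A ** B) *v x))"
        using gen1[OF mul_inv(1)] unfolding ch_def by (metis mult_1_left)
      also have "\<dots> = f (B *v x)"
        using inv_props[OF ginv[OF mul_inv(1)]] by (simp add: matrix_vector_mul_assoc matrix_mul_assoc)
      also have "\<dots> = f x" using mul_inv(3) unfolding poly_act_def by metis
      finally show ?thesis .
    qed
    then show ?case unfolding poly_act_def by auto
  qed
  then have "Vtilde_invariant_poly f" unfolding Vtilde_invariant_poly_def by blast
  moreover have "defined_by C f" unfolding defined_by_def C ..
  ultimately show ?thesis using hf by blast
qed

end
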